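(* Let $r>0$ and $\overline T>0$. For $\mathbf h,\mathbf g\in\mathbb R^3$ set $\mathbf v=\mathbf h+\frac{r}{1+r}\mathbf g$ and $\mathbf w=\sqrt r\,\mathbf h-\frac{\sqrt r}{1+r}\mathbf g$. Then for all multi-indices $\lambda=(l_1,l_2,l_3),\kappa=(k_1,k_2,k_3)\in\mathbb N^3$, $$H^{\mathbf 0,\overline T}_\lambda(\mathbf v)H^{\mathbf 0,\overline T}_\kappa(\mathbf w)=\sum_{\kappa'+\lambda'=\kappa+\lambda}c^{l_1k_1}_{l'_1k'_1}(r)\,c^{l_2k_2}_{l'_2k'_2}(r)\,c^{l_3k_3}_{l'_3k'_3}(r)\,H^{\mathbf 0,\overline T}_{\lambda'}\big(\sqrt{1+r}\,\mathbf h\big)H^{\mathbf 0,\overline T}_{\kappa'}\Big(\sqrt{\tfrac{r}{1+r}}\,\mathbf g\Big),$$ where the sum runs over $\kappa'=(k'_1,k'_2,k'_3),\lambda'=(l'_1,l'_2,l'_3)\in\mathbb N^3$ with $\kappa'+\lambda'=\kappa+\lambda$, and $$c^{l_dk_d}_{l'_dk'_d}(r)=(1+r)^{-\frac{l'_d+k'_d}{2}}\sum_{s\in\mathbb Z}C_{l_d}^{s}C_{k_d}^{l'_d-s}(-1)^{k_d-l'_d+s}r^{\frac{l_d+l'_d}{2}-s}.$$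
   Context: For $\mathbf u\in\mathbb R^3$, $T>0$, $\mathcal M_{\mathbf u,T}(\mathbf v)=(2\pi T)^{-3/2}\exp\!\big(-|\mathbf v-\mathbf u|^2/(2T)\big)$, and for $\alpha\in\mathbb N^3$ with $|\alpha|=\alpha_1+\alpha_2+\alpha_3$, the Hermite polynomial is $H^{\mathbf u,T}_\alpha(\mathbf v)=\frac{(-1)^{|\alpha|}T^{|\alpha|/2}}{\mathcal M_{\mathbf u,T}(\mathbf v)}\frac{\partial^{|\alpha|}}{\partial v_1^{\alpha_1}\partial v_2^{\alpha_2}\partial v_3^{\alpha_3}}\mathcal M_{\mathbf u,T}(\mathbf v)$. $C_n^k$ is the binomial coefficient, taken to be $0$ when $k<0$ or $k>n$. *)

theory Defs
  imports "HOL-Analysis.Analysis"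
begin

definition maxwellian :: "real^3 \<Rightarrow> real \<Rightarrow> real^3 \<Rightarrow> real" where
  "maxwellian u T v = (2 * pi * T) powr (-3/2) * exp (- ((norm (v - u))^2) / (2 * T))"

definition partial_d :: "3 \<Rightarrow> (real^3 \<Rightarrow> real) \<Rightarrow> real^3 \<Rightarrow> real" where
  "partial_d i f v = deriv (\<lambda>t. f (\<chi> j. if j = i then t else v $ j)) (v $ i)"

definition dpow :: "(3 \<Rightarrow> nat) \<Rightarrow> (real^3 \<Rightarrow> real) \<Rightarrow> real^3 \<Rightarrow> real" where
  "dpow \<alpha> f = (partial_d 1 ^^ \<alpha> 1) ((partial_d 2 ^^ \<alpha> 2) ((partial_d 3 ^^ \<alpha> 3) f))"

definition mabs :: "(3 \<Rightarrow> nat) \<Rightarrow> nat" where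
  "mabs \<alpha> = \<alpha> 1 + \<alpha> 2 + \<alpha> 3"

definition hermite :: "real^3 \<Rightarrow> real \<Rightarrow> (3 \<Rightarrow> nat) \<Rightarrow> real^3 \<Rightarrow> real" where
  "hermite u T \<alpha> v = (-1) ^ mabs \<alpha> * T powr (real (mabs \<alpha>) / 2)
      / maxwellian u T v * dpow \<alpha> (maxwellian u T) v"

definition binom_int :: "nat \<Rightarrow> int \<Rightarrow> real" where
  "binom_int n k = (if k < 0 \<or> k > int n then 0 else real (n choose nat k))"

text \<open>Coefficient c^{l k}_{l' k'}(r). Only s in 0..l contribute (C_l^s = 0 otherwise).\<close>
definition coef_c :: "nat \<Rightarrow> nat \<Rightarrow> nat \<Rightarrow> nat \<Rightarrow> real \<Rightarrow> real" where
  "coef_c l k l' k' r = (1 + r) powr (- (real l' + real k') / 2) *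
     (\<Sum>s\<in>{0..int l}. binom_int l s * binom_int k (int l' - s)
        * (-1) powi (int k - int l' + s) * r powr ((real l + real l') / 2 - real_of_int s))"

end

theory Submission
  imports Defs "HOL-Computational_Algebra.Polynomial"
begin


fun He :: "nat \<Rightarrow> real \<Rightarrow> real" where
  "He 0 x = 1"
| "He (Suc n) x = x * He n x - real n * He (n - 1) x"

lemma He_deriv: "(He n has_real_derivative real n * He (n - 1) x) (at x)"
proof (induction n rule: less_induct)
  case (less n)
  show ?case
  proof (cases n)
    case 0 then show ?thesis by (auto intro!: derivative_eq_intros)
  next
    case (Suc m)
    have IH1: "(He m has_real_derivative real m * He (m - 1) x) (at x)" using less \<open>n = Suc m\<close> by simp
    show ?thesis
    proof (cases m)
      case 0 then show ?thesis using Suc by (auto intro!: derivative_eq_intros)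
    next
      case (Suc j)
      have IH2: "(He j has_real_derivative real j * He (j - 1) x) (at x)" using less \<open>n = Suc m\<close> Suc by auto
      have rec: "He m x = x * He j x - real j * He (j - 1) x" using Suc by simp
      have IH2': "(He (m - 1) has_real_derivative real j * He (j - 1) x) (at x)" using IH2 Suc by simp
      have "((\<lambda>x. x * He m x - real m * He (m - 1) x) has_real_derivative
          1 * He m x + x * (real m * He (m - 1) x) - real m * (real j * He (j - 1) x)) (at x)"
        by (rule DERIV_cong[OF DERIV_diff[OF DERIV_mult[OF DERIV_ident IH1] DERIV_cmult[OF IH2']]]) (simp add: algebra_simps)
      moreover have "1 * He m x + x * (real m * He (m - 1) x) - real m * (real j * He (j - 1) x)
          = real n * He (n - 1) x"
        using Suc \<open>n = Suc m\<close> rec by (simp add: algebra_simps)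
      moreover have "He n = (\<lambda>x. x * He m x - real m * He (m - 1) x)" using \<open>n = Suc m\<close> by (simp add: fun_eq_iff)
      ultimately show ?thesis by simp
    qed
  qed
qed

definition Dg :: "real \<Rightarrow> nat \<Rightarrow> real \<Rightarrow> real" where
  "Dg T n t = (- 1 / sqrt T) ^ n * He n (t / sqrt T) * exp (- (t^2) / (2 * T))"

lemma Dg_deriv:
  assumes "T > 0"
  shows "(Dg T n has_real_derivative Dg T (Suc n) t) (at t)"
proof -
  have sT: "sqrt T / T = 1 / sqrt T" using assms
  proof -
    have "sqrt T * sqrt T = T" using assms by simp
    then show ?thesis using assms by (metis nonzero_divide_mult_cancel_right real_sqrt_eq_zero_cancel_iff divide_divide_eq_left less_irrefl div_by_1 divide_self_if)
  qed
  have d: "((\<lambda>t. He n (t / sqrt T)) has_real_derivative real n * He (n - 1) (t / sqrt T) * (1 / sqrt T)) (at t)"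
    by (rule DERIV_chain2[OF He_deriv], rule DERIV_cong[OF DERIV_cdivide[OF DERIV_ident]], simp)
  have e: "((\<lambda>t. exp (-(t^2)/(2*T))) has_real_derivative exp(-(t^2)/(2*T)) * (-(2*t)/(2*T))) (at t)"
    using assms by (auto intro!: derivative_eq_intros simp: field_simps power2_eq_square)
  have "(Dg T n has_real_derivative (- 1 / sqrt T) ^ n * (real n * He (n - 1) (t / sqrt T) * (1 / sqrt T) * exp (- (t^2) / (2 * T))
        + He n (t / sqrt T) * (exp (- (t^2) / (2 * T)) * (- (2 * t) / (2 * T))))) (at t)"
    unfolding Dg_def
    by (rule DERIV_cong[OF DERIV_mult[OF DERIV_cmult[OF d] e]]) (simp add: algebra_simps)
  moreover have "(- 1 / sqrt T) ^ n * (real n * He (n - 1) (t / sqrt T) * (1 / sqrt T) * exp (- (t^2) / (2 * T))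
        + He n (t / sqrt T) * (exp (- (t^2) / (2 * T)) * (- (2 * t) / (2 * T)))) = Dg T (Suc n) t"
  proof -
    have "sqrt T * sqrt T = T" using assms by simp
    moreover note sT
    ultimately show ?thesis unfolding Dg_def using assms
      by (simp add: field_simps power2_eq_square abs_of_pos)
  qed
  ultimately show ?thesis by simp
qed



lemma prod_split3:
  fixes F :: "3 \<Rightarrow> real"
  shows "(\<Prod>d\<in>UNIV. F d) = F i * (\<Prod>d\<in>UNIV-{i}. F d)"
  by (rule prod.remove) auto

lemma partial_prod:
  fixes F :: "3 \<Rightarrow> real \<Rightarrow> real"
  assumes "\<And>t. (F i has_real_derivative G t) (at t)"
  shows "partial_d i (\<lambda>v. c * (\<Prod>d\<in>UNIV. F d (v$d))) v = c * (\<Prod>d\<in>UNIV. (F(i := G)) d (v$d))"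
proof -
  let ?P = "\<Prod>d\<in>UNIV-{i}. F d (v$d)"
  have eq: "(\<lambda>t. c * (\<Prod>d\<in>UNIV. F d ((\<chi> j. if j = i then t else v$j) $ d))) = (\<lambda>t. (c * ?P) * F i t)"
  proof
    fix t
    have "(\<Prod>d\<in>UNIV. F d ((\<chi> j. if j = i then t else v$j) $ d)) = F i t * (\<Prod>d\<in>UNIV-{i}. F d ((\<chi> j. if j = i then t else v$j) $ d))"
      by (subst prod.remove[of UNIV i]) auto
    also have "(\<Prod>d\<in>UNIV-{i}. F d ((\<chi> j. if j = i then t else v$j) $ d)) = ?P"
      by (rule prod.cong) auto
    finally show "c * (\<Prod>d\<in>UNIV. F d ((\<chi> j. if j = i then t else v$j) $ d)) = (c * ?P) * F i t" by simp
  qed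
  have A1: "partial_d i (\<lambda>v. c * (\<Prod>d\<in>UNIV. F d (v$d))) v = (c * ?P) * G (v$i)"
    unfolding partial_d_def eq by (rule DERIV_imp_deriv[OF DERIV_cmult[OF assms]])
  have B1: "(\<Prod>d\<in>UNIV. (F(i := G)) d (v$d)) = G (v$i) * (\<Prod>d\<in>UNIV-{i}. (F(i := G)) d (v$d))"
    by (subst prod.remove[of UNIV i]) auto
  have B2: "(\<Prod>d\<in>UNIV-{i}. (F(i := G)) d (v$d)) = ?P"
    by (rule prod.cong) auto
  show ?thesis by (simp only: A1 B1 B2 ac_simps)
qed

lemma partial_Dg:
  assumes "T > 0"
  shows "partial_d i (\<lambda>v. c * (\<Prod>d\<in>UNIV. Dg T (m d) (v$d))) = (\<lambda>v. c * (\<Prod>d\<in>UNIV. Dg T ((m(i := Suc (m i))) d) (v$d)))"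
proof
  fix v
  have "partial_d i (\<lambda>v. c * (\<Prod>d\<in>UNIV. (\<lambda>d. Dg T (m d)) d (v$d))) v
      = c * (\<Prod>d\<in>UNIV. ((\<lambda>d. Dg T (m d))(i := Dg T (Suc (m i)))) d (v$d))"
    by (rule partial_prod) (use Dg_deriv[OF assms] in auto)
  also have "(\<lambda>d. Dg T (m d))(i := Dg T (Suc (m i))) = (\<lambda>d. Dg T ((m(i := Suc (m i))) d))"
    by auto
  finally show "partial_d i (\<lambda>v. c * (\<Prod>d\<in>UNIV. Dg T (m d) (v$d))) v = c * (\<Prod>d\<in>UNIV. Dg T ((m(i := Suc (m i))) d) (v$d))"
    by simp
qed

lemma partial_Dg_pow:
  assumes "T > 0"
  shows "(partial_d i ^^ n) (\<lambda>v. c * (\<Prod>d\<in>UNIV. Dg T (m d) (v$d))) = (\<lambda>v. c * (\<Prod>d\<in>UNIV. Dg T ((m(i := m i + n)) d) (v$d)))"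
proof (induction n)
  case 0 then show ?case by simp
next
  case (Suc n)
  have "(partial_d i ^^ Suc n) (\<lambda>v. c * (\<Prod>d\<in>UNIV. Dg T (m d) (v$d))) = partial_d i (\<lambda>v. c * (\<Prod>d\<in>UNIV. Dg T ((m(i := m i + n)) d) (v$d)))"
    using Suc by simp
  also have "\<dots> = (\<lambda>v. c * (\<Prod>d\<in>UNIV. Dg T (((m(i := m i + n))(i := Suc ((m(i := m i + n)) i))) d) (v$d)))"
    by (rule partial_Dg[OF assms])
  also have "(m(i := m i + n))(i := Suc ((m(i := m i + n)) i)) = m(i := m i + Suc n)" by simp
  finally show ?case .
qed

lemma maxw:
  assumes "T > 0"
  shows "maxwellian 0 T = (\<lambda>v. (2*pi*T) powr (-3/2) * (\<Prod>d\<in>UNIV. Dg T ((\<lambda>_. 0) d) (v$d)))"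
proof
  fix v :: "real^3"
  have "(norm v)^2 = inner v v" by (simp only: power2_norm_eq_inner)
  also have "\<dots> = (\<Sum>d\<in>UNIV. (v$d)^2)"
    by (simp add: inner_vec_def power2_eq_square)
  finally have "(norm v)^2 = (\<Sum>d\<in>UNIV. (v$d)^2)" .
  then have "exp (- ((norm (v - 0))^2) / (2 * T)) = exp (\<Sum>d\<in>UNIV. - ((v$d)^2) / (2*T))"
    by (simp add: sum_divide_distrib sum_negf)
  also have "\<dots> = (\<Prod>d\<in>UNIV. Dg T 0 (v$d))"
    by (simp add: exp_sum Dg_def)
  finally show "maxwellian 0 T v = (2*pi*T) powr (-3/2) * (\<Prod>d\<in>UNIV. Dg T ((\<lambda>_. 0) d) (v$d))"
    by (simp add: maxwellian_def)
qed

lemma dpow_maxw: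
  assumes "T > 0"
  shows "dpow \<alpha> (maxwellian 0 T) v = (2*pi*T) powr (-3/2) * (\<Prod>d\<in>UNIV. Dg T (\<alpha> d) (v$d))"
proof -
  define z :: "3 \<Rightarrow> nat" where "z = (\<lambda>_. 0)"
  have m: "(((z(3 := z 3 + \<alpha> 3))(2 := (z(3 := z 3 + \<alpha> 3)) 2 + \<alpha> 2))(1 :=
       ((z(3 := z 3 + \<alpha> 3))(2 := (z(3 := z 3 + \<alpha> 3)) 2 + \<alpha> 2)) 1 + \<alpha> 1)) = \<alpha>"
  proof
    fix d :: 3 show "(((z(3 := z 3 + \<alpha> 3))(2 := (z(3 := z 3 + \<alpha> 3)) 2 + \<alpha> 2))(1 :=
       ((z(3 := z 3 + \<alpha> 3))(2 := (z(3 := z 3 + \<alpha> 3)) 2 + \<alpha> 2)) 1 + \<alpha> 1)) d = \<alpha> d"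
      using exhaust_3[of d] by (auto simp: z_def)
  qed
  have mx: "maxwellian 0 T = (\<lambda>v. (2*pi*T) powr (-3/2) * (\<Prod>d\<in>UNIV. Dg T (z d) (v$d)))"
    unfolding z_def by (rule maxw[OF assms])
  show ?thesis
    unfolding dpow_def mx partial_Dg_pow[OF assms] m ..
qed

lemma prod_pow_mabs: "(\<Prod>d\<in>UNIV. (x::real) ^ (\<alpha> d)) = x ^ mabs \<alpha>"
  by (simp add: power_sum[symmetric] sum_3 mabs_def)

lemma hermite_prod:
  assumes "T > 0"
  shows "hermite 0 T \<alpha> v = (\<Prod>d\<in>UNIV. He (\<alpha> d) (v$d / sqrt T))"
proof -
  let ?E = "\<lambda>t. exp (- (t^2) / (2 * T))"
  let ?C = "(2*pi*T) powr (-3/2)"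
  have M: "maxwellian 0 T v = ?C * (\<Prod>d\<in>UNIV. ?E (v$d))"
    using maxw[OF assms] by (simp add: Dg_def)
  have D: "dpow \<alpha> (maxwellian 0 T) v = ?C * ((-1/sqrt T) ^ mabs \<alpha> * (\<Prod>d\<in>UNIV. He (\<alpha> d) (v$d / sqrt T)) * (\<Prod>d\<in>UNIV. ?E (v$d)))"
    unfolding dpow_maxw[OF assms] Dg_def prod.distrib prod_pow_mabs by simp
  have C: "?C > 0" using assms by simp
  have E: "(\<Prod>d\<in>UNIV. ?E (v$d)) > 0" by (rule prod_pos) auto
  have P: "(-1) ^ mabs \<alpha> * T powr (real (mabs \<alpha>) / 2) * (-1/sqrt T) ^ mabs \<alpha> = 1"
  proof -
    have "T powr (real (mabs \<alpha>) / 2) = sqrt T ^ mabs \<alpha>"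
      using assms by (simp add: powr_half_sqrt[symmetric] powr_realpow[symmetric] powr_powr)
    then have "(-1) ^ mabs \<alpha> * T powr (real (mabs \<alpha>) / 2) * (-1/sqrt T) ^ mabs \<alpha> = ((-1) * sqrt T * (-1/sqrt T)) ^ mabs \<alpha>"
      by (simp only: power_mult_distrib)
    also have "(-1) * sqrt T * (-1/sqrt T) = 1" using assms by simp
    finally show ?thesis by simp
  qed
  show ?thesis
    unfolding hermite_def M D using C E P by (simp add: field_simps)
qed



definition PP :: "real \<Rightarrow> real \<Rightarrow> nat \<Rightarrow> nat \<Rightarrow> real poly" where
  "PP a b l k = [:b, a:] ^ l * [:-a, b:] ^ k"

lemma sm0: "[:c::real:] * p = smult c p" by (simp add: poly_eq_iff coeff_mult)
lemmas sm = sm0[symmetric]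
definition X1 :: "real poly" where "X1 = [:0, 1:]"
lemma pc0: "pCons 0 p = X1 * p" by (simp add: X1_def)

lemma G1:
  fixes A B x ca cb Al Al1 Bk Bk1 L K :: "'a::comm_ring_1"
  assumes "A = cb + ca*x" "B = -ca + cb*x" "ca*ca+cb*cb = 1" "L * Al = L * A * Al1" "K * Bk = K * B * Bk1"
  shows "ca*(L*Al1*ca*Bk + Al*(K*Bk1*cb)) + cb*((L+K)*(Al*Bk) - x*(L*Al1*ca*Bk + Al*(K*Bk1*cb))) = L*(Al1*Bk)"
proof -
  have e1: "(L+K)*(Al*Bk) = (L*Al)*Bk + Al*(K*Bk)" by (simp add: algebra_simps)
  have "ca*(L*Al1*ca*Bk + Al*(K*Bk1*cb)) + cb*((L+K)*(Al*Bk) - x*(L*Al1*ca*Bk + Al*(K*Bk1*cb)))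
     = ca*(L*Al1*ca*Bk + Al*(K*Bk1*cb)) + cb*((L*A*Al1)*Bk + Al*(K*B*Bk1) - x*(L*Al1*ca*Bk + Al*(K*Bk1*cb)))"
    unfolding e1 assms(4,5) ..
  also have "\<dots> = L*(Al1*Bk)*(ca*ca+cb*cb)"
    unfolding assms(1,2) by (simp add: algebra_simps)
  finally show ?thesis using assms(3) by simp
qed

lemma G2:
  fixes A B x ca cb Al Al1 Bk Bk1 L K :: "'a::comm_ring_1"
  assumes "A = cb + ca*x" "B = -ca + cb*x" "ca*ca+cb*cb = 1" "L * Al = L * A * Al1" "K * Bk = K * B * Bk1"
  shows "cb*(L*Al1*ca*Bk + Al*(K*Bk1*cb)) - ca*((L+K)*(Al*Bk) - x*(L*Al1*ca*Bk + Al*(K*Bk1*cb))) = K*(Al*Bk1)"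
proof -
  have e1: "(L+K)*(Al*Bk) = (L*Al)*Bk + Al*(K*Bk)" by (simp add: algebra_simps)
  have e2: "cb*(L*Al1*ca*Bk) = ca*((L*A*Al1)*Bk) - ca * (x * (L*Al1*ca*Bk))"
    unfolding assms(1) by (simp add: algebra_simps)
  have "cb*(L*Al1*ca*Bk + Al*(K*Bk1*cb)) - ca*((L+K)*(Al*Bk) - x*(L*Al1*ca*Bk + Al*(K*Bk1*cb)))
     = cb*(L*Al1*ca*Bk) + cb*(Al*(K*Bk1*cb)) - ca*((L*A*Al1)*Bk + Al*(K*B*Bk1) - x*(L*Al1*ca*Bk + Al*(K*Bk1*cb)))"
    unfolding e1 assms(4,5) by (simp add: algebra_simps)
  also have "\<dots> = K*(Al*Bk1)*(ca*ca+cb*cb)"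
    unfolding e2 unfolding assms(2) by (simp add: algebra_simps)
  finally show ?thesis using assms(3) by simp
qed

lemma powpred: "(of_nat n :: 'a::comm_ring_1) * A ^ n = of_nat n * A * A ^ (n - 1)"
  by (cases n) (simp_all add: algebra_simps)

lemma oa: "[:real l + real k:] = (of_nat l + of_nat k :: real poly)" by (simp add: of_nat_poly)

lemma sn: "smult (of_nat n) q = (of_nat n :: real poly) * q"
  by (simp add: of_nat_poly)

lemma dA: "pderiv [:b, a:] = [:a::real:]" by (simp add: pderiv_pCons)

lemma dPP: "pderiv (PP a b l k) = of_nat l * [:b, a:]^(l-1) * [:a:] * [:-a, b:]^k + [:b, a:]^l * (of_nat k * [:-a, b:]^(k-1) * [:b:])"
  unfolding PP_def pderiv_mult pderiv_power sn dA by (simp only: mult_ac add_ac)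

lemma PI1:
  fixes a b :: real assumes ab: "a^2 + b^2 = 1"
  shows "smult a (pderiv (PP a b l k)) + smult b (smult (of_nat (l+k)) (PP a b l k) - pCons 0 (pderiv (PP a b l k)))
         = smult (of_nat l) (PP a b (l - 1) k)"
proof -
  have c: "[:a:]*[:a:] + [:b:]*[:b:] = (1::real poly)" using ab by (simp add: power2_eq_square)
  have "[:a:] * (of_nat l * [:b, a:]^(l-1) * [:a:] * [:-a, b:]^k + [:b, a:]^l * (of_nat k * [:-a, b:]^(k-1) * [:b:]))
      + [:b:] * ((of_nat l + of_nat k) * ([:b, a:]^l * [:-a, b:]^k) - X1 * (of_nat l * [:b, a:]^(l-1) * [:a:] * [:-a, b:]^k + [:b, a:]^l * (of_nat k * [:-a, b:]^(k-1) * [:b:])))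
      = of_nat l * ([:b, a:]^(l-1) * [:-a, b:]^k)"
    by (rule G1[OF _ _ c powpred powpred]) (simp_all add: X1_def)
  then show ?thesis unfolding dPP unfolding PP_def sm pc0 of_nat_poly[symmetric] of_nat_add oa .
qed

lemma PI2:
  fixes a b :: real assumes ab: "a^2 + b^2 = 1"
  shows "smult b (pderiv (PP a b l k)) - smult a (smult (of_nat (l+k)) (PP a b l k) - pCons 0 (pderiv (PP a b l k)))
         = smult (of_nat k) (PP a b l (k - 1))"
proof -
  have c: "[:a:]*[:a:] + [:b:]*[:b:] = (1::real poly)" using ab by (simp add: power2_eq_square)
  have "[:b:] * (of_nat l * [:b, a:]^(l-1) * [:a:] * [:-a, b:]^k + [:b, a:]^l * (of_nat k * [:-a, b:]^(k-1) * [:b:]))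
      - [:a:] * ((of_nat l + of_nat k) * ([:b, a:]^l * [:-a, b:]^k) - X1 * (of_nat l * [:b, a:]^(l-1) * [:a:] * [:-a, b:]^k + [:b, a:]^l * (of_nat k * [:-a, b:]^(k-1) * [:b:])))
      = of_nat k * ([:b, a:]^l * [:-a, b:]^(k-1))"
    by (rule G2[OF _ _ c powpred powpred]) (simp_all add: X1_def)
  then show ?thesis unfolding dPP unfolding PP_def sm pc0 of_nat_poly[symmetric] of_nat_add oa .
qed



definition Ev :: "real \<Rightarrow> real \<Rightarrow> nat \<Rightarrow> real poly \<Rightarrow> real" where
  "Ev X Y n p = (\<Sum>i\<le>n. coeff p i * He i X * He (n - i) Y)"

lemma Ev_add: "Ev X Y n (p + q) = Ev X Y n p + Ev X Y n q"
  unfolding Ev_def by (simp add: algebra_simps sum.distrib)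
lemma Ev_diff: "Ev X Y n (p - q) = Ev X Y n p - Ev X Y n q"
  unfolding Ev_def by (simp add: algebra_simps sum_subtractf)
lemma Ev_smult: "Ev X Y n (smult c p) = c * Ev X Y n p"
  unfolding Ev_def by (simp add: algebra_simps sum_distrib_left)
lemma Ev_0: "Ev X Y n 0 = 0"
  unfolding Ev_def by simp

lemma EvX:
  assumes "degree p \<le> n"
  shows "X * Ev X Y n p = Ev X Y (Suc n) (pCons 0 p) + Ev X Y (n - 1) (pderiv p)"
proof -
  have rec: "\<And>i. X * He i X = He (Suc i) X + real i * He (i - 1) X" by simp
  have "X * Ev X Y n p = (\<Sum>i\<le>n. coeff p i * He (Suc i) X * He (n - i) Y)
      + (\<Sum>i\<le>n. coeff p i * real i * He (i - 1) X * He (n - i) Y)"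
    unfolding Ev_def sum_distrib_left sum.distrib[symmetric]
  proof (rule sum.cong)
    fix i assume "i \<in> {..n}"
    have "X * (coeff p i * He i X * He (n - i) Y) = coeff p i * (X * He i X) * He (n - i) Y" by simp
    also have "\<dots> = coeff p i * He (Suc i) X * He (n - i) Y + coeff p i * real i * He (i - 1) X * He (n - i) Y"
      unfolding rec by (simp add: algebra_simps)
    finally show "X * (coeff p i * He i X * He (n - i) Y) = coeff p i * He (Suc i) X * He (n - i) Y + coeff p i * real i * He (i - 1) X * He (n - i) Y" .
  qed simp
  moreover have "(\<Sum>i\<le>n. coeff p i * He (Suc i) X * He (n - i) Y) = Ev X Y (Suc n) (pCons 0 p)"
    unfolding Ev_def by (subst sum.atMost_Suc_shift) simp
  moreover have "(\<Sum>i\<le>n. coeff p i * real i * He (i - 1) X * He (n - i) Y) = Ev X Y (n - 1) (pderiv p)"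
  proof (cases n)
    case 0
    then have "pderiv p = 0" using assms by (simp add: pderiv_eq_0_iff)
    then show ?thesis using 0 by (simp add: Ev_0)
  next
    case (Suc m)
    show ?thesis unfolding Ev_def Suc
      by (subst sum.atMost_Suc_shift) (simp add: coeff_pderiv algebra_simps)
  qed
  ultimately show ?thesis by simp
qed

lemma cq: "coeff (pCons 0 (pderiv p)) i = real i * coeff p i"
  by (cases i) (simp_all add: coeff_pderiv)

lemma EvY:
  assumes "degree p \<le> n"
  shows "Y * Ev X Y n p = Ev X Y (Suc n) p + Ev X Y (n - 1) (smult (of_nat n) p - pCons 0 (pderiv p))"
proof -
  have rec: "\<And>i. i \<le> n \<Longrightarrow> Y * He (n - i) Y = He (Suc n - i) Y + real (n - i) * He (n - i - 1) Y"
    by (simp add: Suc_diff_le)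
  have "Y * Ev X Y n p = (\<Sum>i\<le>n. coeff p i * He i X * He (Suc n - i) Y)
      + (\<Sum>i\<le>n. coeff p i * real (n - i) * He i X * He (n - i - 1) Y)"
    unfolding Ev_def sum_distrib_left sum.distrib[symmetric]
  proof (rule sum.cong)
    fix i assume "i \<in> {..n}"
    then have "i \<le> n" by simp
    have "Y * (coeff p i * He i X * He (n - i) Y) = coeff p i * He i X * (Y * He (n - i) Y)" by simp
    also have "\<dots> = coeff p i * He i X * He (Suc n - i) Y + coeff p i * real (n - i) * He i X * He (n - i - 1) Y"
      unfolding rec[OF \<open>i \<le> n\<close>] by (simp add: algebra_simps)
    finally show "Y * (coeff p i * He i X * He (n - i) Y) = coeff p i * He i X * He (Suc n - i) Y + coeff p i * real (n - i) * He i X * He (n - i - 1) Y" .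
  qed simp
  moreover have "(\<Sum>i\<le>n. coeff p i * He i X * He (Suc n - i) Y) = Ev X Y (Suc n) p"
    unfolding Ev_def using assms by (simp add: coeff_eq_0)
  moreover have "(\<Sum>i\<le>n. coeff p i * real (n - i) * He i X * He (n - i - 1) Y) = Ev X Y (n - 1) (smult (of_nat n) p - pCons 0 (pderiv p))"
  proof (cases n)
    case 0
    then show ?thesis by (simp add: Ev_def cq)
  next
    case (Suc m)
    have "(\<Sum>i\<le>Suc m. coeff p i * real (Suc m - i) * He i X * He (Suc m - i - 1) Y)
        = (\<Sum>i\<le>m. coeff p i * real (Suc m - i) * He i X * He (Suc m - i - 1) Y)" by simp
    also have "\<dots> = Ev X Y m (smult (of_nat (Suc m)) p - pCons 0 (pderiv p))"
      unfolding Ev_def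
    proof (rule sum.cong)
      fix i assume "i \<in> {..m}"
      then have "i \<le> m" by simp
      then show "coeff p i * real (Suc m - i) * He i X * He (Suc m - i - 1) Y =
        coeff (smult (of_nat (Suc m)) p - pCons 0 (pderiv p)) i * He i X * He (m - i) Y"
        by (simp add: cq of_nat_diff algebra_simps Suc_diff_le)
    qed simp
    finally show ?thesis using Suc by simp
  qed
  ultimately show ?thesis by simp
qed

lemma EvLin:
  assumes "degree p \<le> n"
  shows "(\<alpha> * X + \<beta> * Y) * Ev X Y n p = Ev X Y (Suc n) ([:\<beta>, \<alpha>:] * p)
     + Ev X Y (n - 1) (smult \<alpha> (pderiv p) + smult \<beta> (smult (of_nat n) p - pCons 0 (pderiv p)))"
proof -
  have "(\<alpha> * X + \<beta> * Y) * Ev X Y n p = \<alpha> * (X * Ev X Y n p) + \<beta> * (Y * Ev X Y n p)" by (simp add: algebra_simps)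
  also have "\<dots> = \<alpha> * (Ev X Y (Suc n) (pCons 0 p) + Ev X Y (n - 1) (pderiv p))
     + \<beta> * (Ev X Y (Suc n) p + Ev X Y (n - 1) (smult (of_nat n) p - pCons 0 (pderiv p)))"
    using EvX[OF assms] EvY[OF assms] by simp
  also have "\<dots> = Ev X Y (Suc n) ([:\<beta>, \<alpha>:] * p)
     + Ev X Y (n - 1) (smult \<alpha> (pderiv p) + smult \<beta> (smult (of_nat n) p - pCons 0 (pderiv p)))"
  proof -
    have h: "Ev X Y (Suc n) (pCons 0 (smult \<alpha> p)) = \<alpha> * Ev X Y (Suc n) (pCons 0 p)"
      using Ev_smult[of X Y "Suc n" \<alpha> "pCons 0 p"] by simp
    show ?thesis by (simp add: Ev_add Ev_smult h algebra_simps)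
  qed
  finally show ?thesis .
qed



lemma degPP: "degree (PP a b l k) \<le> l + k"
proof -
  have "degree (PP a b l k) \<le> degree ([:b, a:] ^ l) + degree ([:-a, b:] ^ k)"
    unfolding PP_def by (rule degree_mult_le)
  also have "degree ([:b, a:] ^ l) \<le> l"
  proof -
    have "degree [:b, a:] \<le> 1" by (cases "a = 0") auto
    then show ?thesis using degree_power_le[of "[:b, a:]" l] by (metis mult_le_mono1 mult_1 order_trans)
  qed
  also have "degree ([:-a, b:] ^ k) \<le> k"
  proof -
    have "degree [:-a, b:] \<le> 1" by (cases "b = 0") auto
    then show ?thesis using degree_power_le[of "[:-a, b:]" k] by (metis mult_le_mono1 mult_1 order_trans)
  qed
  finally show ?thesis by simp
qed

lemma rot_l0:
  assumes ab: "a^2 + b^2 = 1"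
  shows "He l (a*X + b*Y) = Ev X Y l (PP a b l 0)"
proof (induction l rule: less_induct)
  case (less l)
  show ?case
  proof (cases l)
    case 0 then show ?thesis by (simp add: Ev_def PP_def)
  next
    case (Suc j)
    have IH1: "He j (a*X + b*Y) = Ev X Y j (PP a b j 0)" using less Suc by simp
    have IH2: "He (j - 1) (a*X + b*Y) = Ev X Y (j - 1) (PP a b (j - 1) 0)" using less Suc by simp
    have L: "(a*X + b*Y) * Ev X Y j (PP a b j 0) = Ev X Y (Suc j) (PP a b (Suc j) 0) + real j * Ev X Y (j - 1) (PP a b (j - 1) 0)"
      using EvLin[OF degPP[of a b j 0, simplified], of a X b Y] PI1[OF ab, of j 0]
      by (simp add: Ev_smult PP_def)
    show ?thesis unfolding Suc He.simps IH1 IH2 L by simp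
  qed
qed

lemma rot1d:
  assumes ab: "a^2 + b^2 = 1"
  shows "He l (a*X + b*Y) * He k (b*X - a*Y) = Ev X Y (l + k) (PP a b l k)"
proof (induction k rule: less_induct)
  case (less k)
  show ?case
  proof (cases k)
    case 0 then show ?thesis using rot_l0[OF ab] by simp
  next
    case (Suc m)
    have IH1: "He l (a*X + b*Y) * He m (b*X - a*Y) = Ev X Y (l + m) (PP a b l m)" using less Suc by simp
    have IH2: "real m * (He l (a*X + b*Y) * He (m - 1) (b*X - a*Y)) = real m * Ev X Y (l + m - 1) (PP a b l (m - 1))"
    proof (cases m)
      case 0 then show ?thesis by simp
    next
      case (Suc q)
      then show ?thesis using less[of "m - 1"] \<open>k = Suc m\<close> by simp
    qed
    have w: "b*X - a*Y = b*X + (-a)*Y" by simp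
    have L: "(b*X - a*Y) * Ev X Y (l + m) (PP a b l m) = Ev X Y (l + Suc m) (PP a b l (Suc m)) + real m * Ev X Y (l + m - 1) (PP a b l (m - 1))"
    proof -
      have pp: "[:-a, b:] * PP a b l m = PP a b l (Suc m)" unfolding PP_def power_Suc by (simp only: mult_ac)
      note E1 = EvLin[OF degPP[of a b l m], of b X "-a" Y, unfolded pp]
      have E2: "smult b (pderiv (PP a b l m)) + smult (-a) (smult (of_nat (l+m)) (PP a b l m) - pCons 0 (pderiv (PP a b l m)))
         = smult (of_nat m) (PP a b l (m - 1))"
        using PI2[OF ab, of l m] by simp
      show ?thesis unfolding w E1 E2 Ev_smult by simp
    qed
    have "He l (a*X + b*Y) * He k (b*X - a*Y)
        = (b*X - a*Y) * (He l (a*X + b*Y) * He m (b*X - a*Y)) - real m * (He l (a*X + b*Y) * He (m - 1) (b*X - a*Y))"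
      unfolding Suc He.simps by (simp add: algebra_simps)
    also have "\<dots> = Ev X Y (l + k) (PP a b l k)"
      unfolding IH1 IH2 L Suc by simp
    finally show ?thesis .
  qed
qed



lemma term_eq:
  fixes r a b :: real
  assumes r: "r > 0" and a: "a = exp (-(ln (1+r))/2)" and b: "b = exp (ln r/2 - ln (1+r)/2)"
    and il: "i \<le> l" and il': "i \<le> l'" and j: "j + l' = k + i"
  shows "a^i * b^(l-i) * (b^(l'-i) * (-a)^j) = (1+r) powr (-(real l' + real (l+k-l'))/2) * (-1)^j * r powr ((real l + real l')/2 - real i)"
proof -
  let ?A = "ln (1+r)" and ?R = "ln r"
  have pw: "\<And>x n. (exp x)^n = exp (real n * x)" by (simp add: exp_of_nat_mult)
  have L: "a^i * b^(l-i) * (b^(l'-i) * (-a)^j) = (-1)^j * exp (real i * (-?A/2) + real (l-i) * (?R/2 - ?A/2) + real (l'-i) * (?R/2 - ?A/2) + real j * (-?A/2))"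
  proof -
    have "a^i * b^(l-i) * (b^(l'-i) * (-a)^j) = (-1)^j * (exp (real i * (-?A/2)) * exp (real (l-i) * (?R/2 - ?A/2)) * exp (real (l'-i) * (?R/2 - ?A/2)) * exp (real j * (-?A/2)))"
      unfolding power_minus[of a j] unfolding a b pw by (simp only: mult_ac)
    then show ?thesis by (simp only: exp_add)
  qed
  have R: "(1+r) powr (-(real l' + real (l+k-l'))/2) * (-1)^j * r powr ((real l + real l')/2 - real i)
      = (-1)^j * exp ((-(real l' + real (l+k-l'))/2) * ?A + ((real l + real l')/2 - real i) * ?R)"
    using r by (simp add: powr_def exp_add mult_ac)
  have e1: "real (l - i) = real l - real i" using il by simp
  have e2: "real (l' - i) = real l' - real i" using il' by simp
  have e3: "real (l + k - l') = real l + real k - real l'" using j il by (simp add: of_nat_diff)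
  have e4: "real j = real k + real i - real l'" using j by (metis add_diff_cancel_right' of_nat_add)
  have "real i * (-?A/2) + real (l-i) * (?R/2 - ?A/2) + real (l'-i) * (?R/2 - ?A/2) + real j * (-?A/2)
      = (-(real l' + real (l+k-l'))/2) * ?A + ((real l + real l')/2 - real i) * ?R"
    unfolding e1 e2 e3 e4 by (simp add: field_simps)
  then show ?thesis unfolding L R by simp
qed
lemma deg_lin_pow: "degree ([:c, d:] ^ n) \<le> n"
proof -
  have "degree [:c, d:] \<le> 1" by (cases "d = 0") auto
  then show ?thesis using degree_power_le[of "[:c, d:]" n] by (metis mult_le_mono1 mult_1 order_trans)
qed

lemma coeff_lin_pow: "coeff ([:c, d:] ^ n) i = (if i \<le> n then of_nat (n choose i) * d ^ i * c ^ (n - i) else 0)"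
  using coeff_linear_poly_power[of i n c d] deg_lin_pow[of c d n] by (auto intro: coeff_eq_0)

lemma coeff_PP:
  fixes r a b :: real
  assumes r: "r > 0" and a: "a = exp (-(ln (1+r))/2)" and b: "b = exp (ln r/2 - ln (1+r)/2)"
    and l': "l' \<le> l + k"
  shows "coeff (PP a b l k) l' = coef_c l k l' (l + k - l') r"
proof -
  let ?c = "(1 + r) powr (- (real l' + real (l + k - l')) / 2)"
  define G where "G i = coeff ([:b, a:] ^ l) i * coeff ([:-a, b:] ^ k) (l' - i)" for i
  define H where "H i = binom_int l (int i) * binom_int k (int l' - int i)
        * (-1) powi (int k - int l' + int i) * r powr ((real l + real l') / 2 - real i)" for i
  have lhs: "coeff (PP a b l k) l' = (\<Sum>i\<le>l'. G i)"
    unfolding PP_def coeff_mult G_def ..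
  have rhs0: "(\<Sum>s\<in>{0..int l}. binom_int l s * binom_int k (int l' - s)
        * (-1) powi (int k - int l' + s) * r powr ((real l + real l') / 2 - real_of_int s)) = (\<Sum>i\<in>{0..l}. H i)"
  proof -
    have "{0..int l} = int ` {0..l}" by (simp add: image_int_atLeastAtMost)
    then show ?thesis unfolding H_def by (simp add: sum.reindex)
  qed
  have rhs: "coef_c l k l' (l + k - l') r = ?c * (\<Sum>i\<le>l. H i)"
    unfolding coef_c_def rhs0 atLeast0AtMost ..
  have s1: "(\<Sum>i\<le>l'. G i) = (\<Sum>i\<in>{..l'} \<inter> {..l}. G i)"
    by (rule sum.mono_neutral_right) (auto simp: G_def coeff_lin_pow)
  have s2: "(\<Sum>i\<le>l. H i) = (\<Sum>i\<in>{..l'} \<inter> {..l}. H i)"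
    by (rule sum.mono_neutral_right) (auto simp: H_def binom_int_def)
  have s3: "(\<Sum>i\<in>{..l'} \<inter> {..l}. G i) = (\<Sum>i\<in>{..l'} \<inter> {..l}. ?c * H i)"
  proof (rule sum.cong)
    fix i assume "i \<in> {..l'} \<inter> {..l}"
    then have il: "i \<le> l" and il': "i \<le> l'" by auto
    show "G i = ?c * H i"
    proof (cases "l' - i \<le> k")
      case True
      define j where "j = k - (l' - i)"
      have j: "j + l' = k + i" using True il' unfolding j_def by simp
      have ij: "int k - int l' + int i = int j" using True il' unfolding j_def by simp
      have bi: "binom_int k (int l' - int i) = real (k choose (l' - i))"
      proof -
        have e: "int l' - int i = int (l' - i)" using il' by simp
        show ?thesis unfolding binom_int_def e using True by simp
      qed
      have bl: "binom_int l (int i) = real (l choose i)"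
        using il unfolding binom_int_def by simp
      have "G i = real (l choose i) * real (k choose (l' - i)) * (a^i * b^(l-i) * (b^(l'-i) * (-a)^j))"
        unfolding G_def coeff_lin_pow using il True unfolding j_def by simp
      also have "\<dots> = real (l choose i) * real (k choose (l' - i)) * (?c * (-1)^j * r powr ((real l + real l')/2 - real i))"
        unfolding term_eq[OF r a b il il' j] ..
      also have "\<dots> = ?c * H i"
        unfolding H_def ij bi bl by simp
      finally show ?thesis .
    next
      case False
      then have "G i = 0" unfolding G_def coeff_lin_pow by simp
      moreover have "H i = 0" using False unfolding H_def binom_int_def by auto
      ultimately show ?thesis by simp
    qed
  qed simp
  show ?thesis
    unfolding lhs rhs s1 s2 s3 sum_distrib_left ..
qed



lemma one_d:
  fixes r T x y :: real
  assumes r: "r > 0" and T: "T > 0"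
  shows "He l ((x + r / (1 + r) * y) / sqrt T) * He k ((sqrt r * x - sqrt r / (1 + r) * y) / sqrt T)
    = (\<Sum>l'\<le>l + k. coef_c l k l' (l + k - l') r * He l' (sqrt (1 + r) * x / sqrt T) * He (l + k - l') (sqrt (r / (1 + r)) * y / sqrt T))"
proof -
  define a where "a = exp (-(ln (1+r))/2)"
  define b where "b = exp (ln r/2 - ln (1+r)/2)"
  define X where "X = sqrt (1 + r) * x / sqrt T"
  define Y where "Y = sqrt (r / (1 + r)) * y / sqrt T"
  have sq: "\<And>z. z > 0 \<Longrightarrow> sqrt z = exp (ln z / 2)"
    by (simp add: powr_half_sqrt[symmetric] powr_def)
  have s1: "sqrt (1 + r) > 0" using r by simp
  have s2: "sqrt (1 + r) * sqrt (1 + r) = 1 + r" using r by simp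
  have s3: "sqrt r * sqrt r = r" using r by simp
  have aa: "a = 1 / sqrt (1 + r)" unfolding a_def using r sq[of "1+r"] by (simp add: exp_minus field_simps)
  have bb: "b = sqrt r / sqrt (1 + r)" unfolding b_def using r sq[of "1+r"] sq[of r] by (simp add: exp_diff)
  have ab: "a^2 + b^2 = 1" unfolding aa bb using r s2 s3 s1
    by (simp add: power2_eq_square field_simps)
  have Yd: "Y = sqrt r / sqrt (1 + r) * y / sqrt T" unfolding Y_def by (simp add: real_sqrt_divide)
  have sT: "sqrt T > 0" using T by simp
  have aX: "a * X = x / sqrt T" unfolding aa X_def using s1 by simp
  have bY: "b * Y = r / (1 + r) * y / sqrt T" unfolding bb Yd using s2 s3
    by (simp add: field_simps)
  have bX: "b * X = sqrt r * x / sqrt T" unfolding bb X_def using s1 by simp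
  have aY: "a * Y = sqrt r / (1 + r) * y / sqrt T" unfolding aa Yd using s2
    by (simp add: field_simps)
  have u: "(x + r / (1 + r) * y) / sqrt T = a * X + b * Y"
    unfolding aX bY by (simp add: add_divide_distrib)
  have w: "(sqrt r * x - sqrt r / (1 + r) * y) / sqrt T = b * X - a * Y"
    unfolding bX aY by (simp add: diff_divide_distrib)
  have "He l ((x + r / (1 + r) * y) / sqrt T) * He k ((sqrt r * x - sqrt r / (1 + r) * y) / sqrt T)
     = Ev X Y (l + k) (PP a b l k)" unfolding u w by (rule rot1d[OF ab])
  also have "\<dots> = (\<Sum>l'\<le>l + k. coef_c l k l' (l + k - l') r * He l' X * He (l + k - l') Y)"
    unfolding Ev_def by (rule sum.cong) (simp_all add: coeff_PP[OF r a_def b_def])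
  finally show ?thesis unfolding X_def Y_def .
qed

theorem lemma1:
  fixes r Tb :: real and h g :: "real^3" and lam kap :: "3 \<Rightarrow> nat"
  assumes "r > 0" and "Tb > 0"
  shows "hermite 0 Tb lam (h + (r / (1 + r)) *\<^sub>R g)
           * hermite 0 Tb kap (sqrt r *\<^sub>R h - (sqrt r / (1 + r)) *\<^sub>R g)
         = (\<Sum>(kap', lam') \<in> {(a, b). \<forall>i. a i + b i = kap i + lam i}.
              (\<Prod>d\<in>UNIV. coef_c (lam d) (kap d) (lam' d) (kap' d) r)
              * hermite 0 Tb lam' (sqrt (1 + r) *\<^sub>R h)
              * hermite 0 Tb kap' (sqrt (r / (1 + r)) *\<^sub>R g))"
proof -
  define n where "n d = lam d + kap d" for d
  define X where "X d = sqrt (1 + r) * h$d / sqrt Tb" for d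
  define Y where "Y d = sqrt (r / (1 + r)) * g$d / sqrt Tb" for d
  define f where "f d l' = coef_c (lam d) (kap d) l' (n d - l') r * He l' (X d) * He (n d - l') (Y d)" for d l'
  define \<phi> where "\<phi> p = ((\<lambda>d. n d - p d), p)" for p :: "3 \<Rightarrow> nat"
  define A where "A = PiE (UNIV :: 3 set) (\<lambda>d. {..n d})"
  have LHS: "hermite 0 Tb lam (h + (r / (1 + r)) *\<^sub>R g)
           * hermite 0 Tb kap (sqrt r *\<^sub>R h - (sqrt r / (1 + r)) *\<^sub>R g)
        = (\<Prod>d\<in>UNIV. \<Sum>l'\<le>n d. f d l')"
    unfolding hermite_prod[OF assms(2)] prod.distrib[symmetric]
  proof (rule prod.cong)
    fix d :: 3
    show "He (lam d) ((h + (r / (1 + r)) *\<^sub>R g) $ d / sqrt Tb) * He (kap d) ((sqrt r *\<^sub>R h - (sqrt r / (1 + r)) *\<^sub>R g) $ d / sqrt Tb)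
        = (\<Sum>l'\<le>n d. f d l')"
      using one_d[OF assms, of "lam d" "h$d" "g$d" "kap d"] by (simp add: f_def n_def X_def Y_def)
  qed simp
  also have "\<dots> = (\<Sum>p\<in>A. \<Prod>d\<in>UNIV. f d (p d))"
    unfolding A_def by (rule prod_sum_PiE) auto
  also have "\<dots> = (\<Sum>(kap', lam') \<in> \<phi> ` A.
              (\<Prod>d\<in>UNIV. coef_c (lam d) (kap d) (lam' d) (kap' d) r)
              * hermite 0 Tb lam' (sqrt (1 + r) *\<^sub>R h)
              * hermite 0 Tb kap' (sqrt (r / (1 + r)) *\<^sub>R g))"
  proof -
    have inj: "inj_on \<phi> A" unfolding \<phi>_def by (rule inj_onI) simp
    show ?thesis
      unfolding sum.reindex[OF inj]
      by (rule sum.cong) (simp_all add: \<phi>_def hermite_prod[OF assms(2)] prod.distrib[symmetric] f_def X_def Y_def)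
  qed
  also have "\<phi> ` A = {(a, b). \<forall>i. a i + b i = kap i + lam i}"
  proof (rule set_eqI, rule iffI)
    fix z assume "z \<in> \<phi> ` A"
    then show "z \<in> {(a, b). \<forall>i. a i + b i = kap i + lam i}"
      unfolding A_def \<phi>_def n_def by (auto simp: PiE_UNIV_domain Pi_iff)
  next
    fix z assume z: "z \<in> {(a, b). \<forall>i. a i + b i = kap i + lam i}"
    obtain a b where zab: "z = (a, b)" by (cases z)
    with z have ab: "\<forall>i. a i + b i = kap i + lam i" by simp
    have "b \<in> A" unfolding A_def n_def using ab by (auto simp: PiE_UNIV_domain Pi_iff) (metis add.commute le_add2)
    moreover have "\<phi> b = z" unfolding \<phi>_def zab n_def using ab by (auto simp: fun_eq_iff) (metis add.commute add_diff_cancel_right')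
    ultimately show "z \<in> \<phi> ` A" by blast
  qed
  finally show ?thesis .
qed

end
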